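(* Let $\beta=\frac{1}{16}$, let $S$ be a string of length $n$, let $d\ge1$, and let $1\le x<y\le n$ with $y-x+1$ even. Let $p_1,\dots,p_{2\log n}$ be primes chosen independently and uniformly at random from the primes in $\left[\frac{d}{\beta}\log^2 n,\frac{34d}{\beta}\log^2 n\right]$. Then: (1) If $\mathsf{HAM}(S[x,y],S[x,y]^R)\le d$, then $\Delta(x,y)\le d$. (2) If $\mathsf{HAM}(S[x,y],S[x,y]^R)\ge 2d$, then $\Delta(x,y)>(1+\beta)d$ with probability at least $1-\frac{1}{n^3}$.
   Context: $S[x,y]=S[x]S[x+1]\cdots S[y]$; for a string $T$ of length $m$, $T^R$ is its reverse and $\mathsf{HAM}(T,T^R)=|\{i: T[i]\neq T[m+1-i]\}|$. A position $i\in[x,y]$ is a mismatch of $S[x,y]$ if $S[i]\neq S[x+y-i]$ (so $\mathsf{HAM}(S[x,y],S[x,y]^R)$ is the number of mismatch positions). For each $j$, $\Delta_j(x,y)$ is the number of residues $r\in\{0,1,\dots,p_j-1\}$ such that the first-level subpattern of $S[x,y]$ at positions $\equiv r\pmod{p_j}$ differs from its mirrored counterpart, i.e. such that there is a mismatch position $i\in[x,y]$ with $i\equiv r \pmod{p_j}$. $\Delta(x,y)=\max_j\Delta_j(x,y)$. $\log$ is base 2. *)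

theory Defs
  imports "HOL-Probability.Probability" "HOL-Computational_Algebra.Primes"
begin

(* A string S of length n is modelled as S :: nat => 'a, read at positions 1..n.
   S[x,y] = S x S (x+1) ... S y. *)

definition beta :: real where "beta = 1 / 16"

definition mismatches :: "(nat \<Rightarrow> 'a) \<Rightarrow> nat \<Rightarrow> nat \<Rightarrow> nat set" where
  "mismatches S x y = {i \<in> {x..y}. S i \<noteq> S (x + y - i)}"

definition ham_rev :: "(nat \<Rightarrow> 'a) \<Rightarrow> nat \<Rightarrow> nat \<Rightarrow> nat" where
  "ham_rev S x y = card (mismatches S x y)"

definition Delta_p :: "(nat \<Rightarrow> 'a) \<Rightarrow> nat \<Rightarrow> nat \<Rightarrow> nat \<Rightarrow> nat" where
  "Delta_p S x y p = card {r \<in> {0..<p}. \<exists>i \<in> mismatches S x y. i mod p = r}"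

definition Delta :: "(nat \<Rightarrow> 'a) \<Rightarrow> nat \<Rightarrow> nat \<Rightarrow> nat \<Rightarrow> (nat \<Rightarrow> nat) \<Rightarrow> nat" where
  "Delta S x y k ps = Max ((\<lambda>j. Delta_p S x y (ps j)) ` {..<k})"

definition num_primes :: "nat \<Rightarrow> nat" where
  "num_primes n = nat \<lceil>2 * log 2 (real n)\<rceil>"

definition prime_range :: "nat \<Rightarrow> nat \<Rightarrow> nat set" where
  "prime_range n d = {p. prime p \<and> real d / beta * (log 2 (real n))\<^sup>2 \<le> real p
                         \<and> real p \<le> 34 * real d / beta * (log 2 (real n))\<^sup>2}"

(* sample space of independent uniform choices p_1..p_k *)
definition prime_tuples :: "nat \<Rightarrow> nat \<Rightarrow> (nat \<Rightarrow> nat) set" where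
  "prime_tuples n d = PiE {..<num_primes n} (\<lambda>_. prime_range n d)"

end

theory Submission
  imports Defs
begin


lemma Suc_div_split:
  fixes n q :: nat assumes "q > 0"
  shows "Suc n div q = n div q + (if q dvd Suc n then 1 else 0)"
  using assms by (auto simp: div_Suc dvd_eq_mod_eq_0 mod_Suc)

lemma card_filter_sum:
  assumes "finite A"
  shows "card {x\<in>A. P x} = (\<Sum>x\<in>A. if P x then 1 else 0)"
  using assms by (simp add: sum.If_cases Int_def)

lemma multiplicity_card:
  fixes p m :: nat assumes "prime p" "m > 0"
  shows "multiplicity p m = card {k\<in>{1..m}. p^k dvd m}"
proof -
  have le: "multiplicity p m \<le> m"
  proof -
    have "p ^ multiplicity p m dvd m" by (rule multiplicity_dvd)
    hence "p ^ multiplicity p m \<le> m" using assms by (simp add: dvd_imp_le)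
    moreover have "multiplicity p m < 2 ^ multiplicity p m" by (rule less_exp)
    moreover have "2 ^ multiplicity p m \<le> p ^ multiplicity p m"
      by (rule power_mono) (use assms prime_ge_2_nat in auto)
    ultimately show ?thesis by linarith
  qed
  have nu: "\<not> is_unit p" using assms(1) not_prime_unit by blast
  have "{k\<in>{1..m}. p^k dvd m} = {1..multiplicity p m}"
  proof -
    have key: "\<And>k. p^k dvd m \<longleftrightarrow> k \<le> multiplicity p m"
      using power_dvd_iff_le_multiplicity[of m p] assms(2) nu by blast
    show ?thesis using le by (auto simp only: key) auto
  qed
  thus ?thesis by simp
qed

lemma legendre:
  fixes p :: nat assumes "prime p"
  shows "multiplicity p (fact n :: nat) = (\<Sum>k\<in>{1..n}. n div p^k)"
proof (induction n)
  case 0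
  then show ?case by simp
next
  case (Suc n)
  have pp: "p > 0" using assms prime_gt_0_nat by blast
  have "multiplicity p (fact (Suc n) :: nat) = multiplicity p (Suc n * fact n)"
    by (simp add: fact_Suc)
  also have "\<dots> = multiplicity p (Suc n) + multiplicity p (fact n :: nat)"
    using assms by (intro prime_elem_multiplicity_mult_distrib) auto
  also have "multiplicity p (Suc n) = card {k\<in>{1..Suc n}. p^k dvd Suc n}"
    using assms by (intro multiplicity_card) auto
  also have "\<dots> = (\<Sum>k\<in>{1..Suc n}. (if p^k dvd Suc n then 1 else 0))"
    by (rule card_filter_sum) simp
  finally have A: "multiplicity p (fact (Suc n) :: nat) = (\<Sum>k\<in>{1..Suc n}. (if p^k dvd Suc n then 1 else 0)) + multiplicity p (fact n :: nat)" .
  have B: "(\<Sum>k\<in>{1..n}. n div p^k) = (\<Sum>k\<in>{1..Suc n}. n div p^k)"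
  proof -
    have "n < p ^ Suc n"
    proof -
      have "2 ^ Suc n \<le> p ^ Suc n" by (rule power_mono) (use assms prime_ge_2_nat in auto)
      moreover have "Suc n < 2 ^ Suc n" by (rule less_exp)
      ultimately show ?thesis by linarith
    qed
    then have "n div p ^ Suc n = 0" by simp
    then show ?thesis by simp
  qed
  have C: "(\<Sum>k\<in>{1..Suc n}. (if p^k dvd Suc n then 1 else 0)) + (\<Sum>k\<in>{1..Suc n}. n div p^k)
      = (\<Sum>k\<in>{1..Suc n}. Suc n div p^k)"
    by (subst sum.distrib[symmetric], rule sum.cong, simp, subst Suc_div_split) (use pp in auto)
  show ?case using A B C Suc by simp
qed

lemma binom_mult_le:
  fixes p m :: nat assumes "prime p" "m > 0"
  shows "p ^ multiplicity p ((2*m) choose m) \<le> 2*m"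
proof (rule ccontr)
  let ?C = "(2*m) choose m"
  let ?e = "multiplicity p ?C"
  assume "\<not> ?thesis"
  hence big: "p ^ ?e > 2*m" by simp
  have Cpos: "?C > 0" by simp
  have "fact (2*m) = (fact m * fact m * ?C :: nat)"
    using binomial_fact_lemma[of m "2*m"] by (simp add: mult_2)
  hence "multiplicity p (fact (2*m) :: nat) = multiplicity p (fact m :: nat) + multiplicity p (fact m :: nat) + ?e"
    using assms Cpos by (simp add: prime_elem_multiplicity_mult_distrib)
  hence eq: "?e = (\<Sum>k\<in>{1..2*m}. 2*m div p^k) - 2 * (\<Sum>k\<in>{1..m}. m div p^k)"
    using legendre[OF assms(1)] by simp
  have s2: "(\<Sum>k\<in>{1..m}. m div p^k) = (\<Sum>k\<in>{1..2*m}. m div p^k)"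
  proof -
    have "\<forall>k\<in>{1..2*m} - {1..m}. m div p^k = 0"
    proof
      fix k assume "k \<in> {1..2*m} - {1..m}"
      hence "k > m" by auto
      have "m < 2 ^ k" using \<open>k > m\<close> less_exp[of m] by (meson less_trans power_strict_increasing_iff one_less_numeral_iff semiring_norm(76))
      also have "2 ^ k \<le> p ^ k" by (rule power_mono) (use assms prime_ge_2_nat in auto)
      finally show "m div p^k = 0" by simp
    qed
    thus ?thesis by (intro sum.mono_neutral_left) auto
  qed
  have "(\<Sum>k\<in>{1..2*m}. 2*m div p^k) - 2 * (\<Sum>k\<in>{1..2*m}. m div p^k)
        = (\<Sum>k\<in>{1..2*m}. 2*m div p^k - 2 * (m div p^k))"
  proof -
    have "\<forall>k. 2 * (m div p^k) \<le> 2*m div p^k"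
    proof
      fix k
      have "2 * (m div p^k) * p^k \<le> 2*m"
        using div_times_less_eq_dividend[of m "p^k"] by (simp add: mult.assoc mult.commute)
      thus "2 * (m div p^k) \<le> 2*m div p^k"
      proof -
        have "p^k > 0" using assms prime_gt_0_nat by simp
        thus ?thesis using \<open>2 * (m div p^k) * p^k \<le> 2*m\<close> less_eq_div_iff_mult_less_eq by blast
      qed
    qed
    hence "(\<Sum>k\<in>{1..2*m}. 2*m div p^k - 2 * (m div p^k)) + (\<Sum>k\<in>{1..2*m}. 2 * (m div p^k))
       = (\<Sum>k\<in>{1..2*m}. 2*m div p^k)"
      by (subst sum.distrib[symmetric]) simp
    thus ?thesis by (simp add: sum_distrib_left)
  qed
  also have "\<dots> \<le> (\<Sum>k\<in>{1..2*m}. if p^k \<le> 2*m then 1 else 0)"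
  proof (rule sum_mono)
    fix k assume "k \<in> {1..2*m}"
    have pk: "p^k > 0" using assms prime_gt_0_nat by simp
    have "2*m div p^k \<le> 2 * (m div p^k) + 1"
    proof -
      have "2*m = (2 * (m div p^k)) * p^k + 2 * (m mod p^k)"
        by (metis div_mult_mod_eq distrib_left mult.assoc)
      then have "2*m div p^k = 2 * (m div p^k) + (2 * (m mod p^k)) div p^k"
        using pk by (metis add.commute div_mult_self1 less_not_refl2)
      moreover have "2 * (m mod p^k) < 2 * p^k" using pk by simp
      hence "(2 * (m mod p^k)) div p^k \<le> 1" using pk
        by (metis One_nat_def div_less_iff_less_mult less_Suc_eq_le mult.commute numeral_2_eq_2)
      ultimately show ?thesis by linarith
    qed
    moreover have "p^k > 2*m \<Longrightarrow> 2*m div p^k = 0" by simp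
    ultimately show "2*m div p^k - 2 * (m div p^k) \<le> (if p^k \<le> 2*m then 1 else 0)"
      by auto
  qed
  also have "\<dots> = card {k\<in>{1..2*m}. p^k \<le> 2*m}"
    by (rule card_filter_sum[symmetric]) simp
  also have "\<dots> \<le> card {1..?e - 1}"
  proof (rule card_mono)
    show "{k \<in> {1..2 * m}. p ^ k \<le> 2 * m} \<subseteq> {1..?e - 1}"
    proof
      fix k assume "k \<in> {k \<in> {1..2 * m}. p ^ k \<le> 2 * m}"
      hence "k \<ge> 1" "p^k < p^?e" using big by auto
      hence "k < ?e" using assms prime_gt_1_nat power_less_imp_less_exp by blast
      thus "k \<in> {1..?e - 1}" using \<open>k \<ge> 1\<close> by auto
    qed
  qed simp
  also have "\<dots> < ?e" 
  proof -
    have "?e \<noteq> 0" proof assume "?e = 0" thus False using big assms(2) by simp qed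
    thus ?thesis by simp
  qed
  finally show False using eq s2 by simp
qed



definition pcount :: "nat \<Rightarrow> nat" where "pcount n = card {p. prime p \<and> p \<le> n}"

lemma binom_le_pcount:
  fixes m :: nat assumes "m > 0"
  shows "(2*m) choose m \<le> (2*m) ^ pcount (2*m)"
proof -
  let ?C = "(2*m) choose m"
  have Cpos: "?C > 0" by simp
  have "?C = (\<Prod>p\<in>prime_factors ?C. p ^ multiplicity p ?C)"
    using prime_factorization_nat[OF Cpos] .
  also have "\<dots> \<le> (\<Prod>p\<in>prime_factors ?C. 2*m)"
    by (rule prod_mono) (auto intro: binom_mult_le[OF _ assms] dest: in_prime_factors_imp_prime)
  also have "\<dots> = (2*m) ^ card (prime_factors ?C)" by simp
  also have "\<dots> \<le> (2*m) ^ pcount (2*m)"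
  proof (rule power_increasing)
    show "1 \<le> 2*m" using assms by simp
    have "prime_factors ?C \<subseteq> {p. prime p \<and> p \<le> 2*m}"
    proof
      fix p assume p: "p \<in> prime_factors ?C"
      hence pr: "prime p" and "p dvd ?C" by (auto dest: in_prime_factors_imp_prime)
      moreover have "?C dvd fact (2*m)"
        using binomial_fact_lemma[of m "2*m"] by (metis dvd_triv_right le_add2 mult_2)
      ultimately have "p dvd fact (2*m)" by (meson dvd_trans)
      thus "p \<in> {p. prime p \<and> p \<le> 2*m}" using pr prime_dvd_fact_iff by auto
    qed
    thus "card (prime_factors ?C) \<le> pcount (2*m)"
      unfolding pcount_def by (intro card_mono) auto
  qed
  finally show ?thesis .
qed

lemma prod_primes_dvd:
  fixes c :: nat
  assumes "finite S" "\<forall>p\<in>S. prime p \<and> p dvd c"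
  shows "\<Prod>S dvd c"
  using assms
proof (induction S rule: finite_induct)
  case empty
  then show ?case by simp
next
  case (insert p S)
  have cop: "coprime p (\<Prod>S)"
  proof -
    have "\<not> p dvd \<Prod>S"
    proof
      assume "p dvd \<Prod>S"
      then obtain q where "q \<in> S" "p dvd q"
        using prime_dvd_prod_iff[of S p id] insert by auto
      hence "p = q" using primes_dvd_imp_eq[of p q] insert \<open>q \<in> S\<close> by auto
      thus False using \<open>q \<in> S\<close> insert by auto
    qed
    thus ?thesis using insert prime_imp_coprime by auto
  qed
  have "p * \<Prod>S dvd c" using insert cop by (intro divides_mult) auto
  thus ?case using insert by simp
qed

lemma binom_odd_le: "(2*m+1) choose m \<le> 4 ^ m"
proof -
  have "2 * ((2*m+1) choose m) = ((2*m+1) choose m) + ((2*m+1) choose (m+1))"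
    using binomial_symmetric[of m "2*m+1"] by simp
  also have "\<dots> = (\<Sum>k\<in>{m, m+1}. (2*m+1) choose k)" by simp
  also have "\<dots> \<le> (\<Sum>k\<le>2*m+1. (2*m+1) choose k)" by (rule sum_mono2) auto
  also have "\<dots> = 2 ^ (2*m+1)" by (rule choose_row_sum)
  also have "\<dots> = 2 * 4 ^ m" by (simp add: power_mult)
  finally show ?thesis by simp
qed

lemma primorial_le: "\<Prod>{p. prime p \<and> p \<le> n} \<le> 4 ^ n"
proof (induction n rule: less_induct)
  case (less n)
  show ?case
  proof (cases "n \<le> 2")
    case True
    hence "{p. prime p \<and> p \<le> n} \<subseteq> {2}" by (auto dest: prime_ge_2_nat)
    hence "{p. prime p \<and> p \<le> n} = {} \<or> {p. prime p \<and> p \<le> n} = {2}" by blast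
    thus ?thesis
    proof
      assume h: "{p. prime p \<and> p \<le> n} = {}" show ?thesis unfolding h by simp
    next
      assume h: "{p. prime p \<and> p \<le> n} = {2}"
      hence "2 \<le> n" by auto
      hence "n = 2" using True by simp
      thus ?thesis using h by simp
    qed
  next
    case False
    show ?thesis
    proof (cases "even n")
      case True
      hence "\<not> prime n" using False prime_odd_nat by auto
      hence "{p. prime p \<and> p \<le> n} = {p. prime p \<and> p \<le> n - 1}"
        by (auto simp: le_eq_less_or_eq)
      hence "\<Prod>{p. prime p \<and> p \<le> n} \<le> 4 ^ (n-1)" using less[of "n-1"] False by simp
      also have "(4::nat) ^ (n-1) \<le> 4 ^ n" by (rule power_increasing) auto
      finally show ?thesis .
    next
      case odd: False
      then obtain m where n: "n = 2*m+1" by (metis oddE)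
      with False have m1: "m \<ge> 1" by auto
      let ?A = "{p. prime p \<and> p \<le> m+1}"
      let ?B = "{p. prime p \<and> m+1 < p \<and> p \<le> 2*m+1}"
      have split: "{p. prime p \<and> p \<le> n} = ?A \<union> ?B" using n by auto
      have fA: "finite ?A" and fB: "finite ?B" by auto
      have eqP: "\<Prod>{p. prime p \<and> p \<le> n} = \<Prod>?A * \<Prod>?B"
        unfolding split by (rule prod.union_disjoint) auto
      have hA: "\<Prod>?A \<le> 4 ^ (m+1)" using less[of "m+1"] n m1 by simp
      have hB: "\<Prod>?B \<le> (2*m+1) choose m"
      proof (rule dvd_imp_le)
        show "0 < (2*m+1) choose m" by simp
        show "\<Prod>?B dvd (2*m+1) choose m"
        proof (rule prod_primes_dvd[OF fB], safe)
          fix p assume p: "prime p" "m+1 < p" "p \<le> 2*m+1"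
          have eq: "fact (2*m+1) = (fact m * fact (m+1) * ((2*m+1) choose m) :: nat)"
            using binomial_fact_lemma[of m "2*m+1"] by (simp add: mult.commute mult.left_commute)
          have "p dvd fact (2*m+1)" using p prime_dvd_fact_iff by blast
          moreover have "\<not> p dvd fact m"
          proof assume "p dvd fact m" hence "p \<le> m" using prime_dvd_fact_iff[OF p(1)] by blast thus False using p by simp qed
          moreover have "\<not> p dvd fact (m+1)"
          proof assume "p dvd fact (m+1)" hence "p \<le> m+1" using prime_dvd_fact_iff[OF p(1)] by blast thus False using p by simp qed
          ultimately show "p dvd (2*m+1) choose m"
            using eq p(1) by (metis prime_dvd_mult_iff)
        qed
      qed
      have "\<Prod>?B \<le> 4 ^ m" using hB binom_odd_le[of m] by linarith
      hence "\<Prod>?A * \<Prod>?B \<le> 4 ^ (m+1) * 4 ^ m" using hA by (rule mult_le_mono[rotated])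
      also have "(4::nat) ^ (m+1) * 4 ^ m = 4 ^ n" using n by (simp add: power_add[symmetric])
      finally show ?thesis using eqP by simp
    qed
  qed
qed



lemma log_le_3sqrt:
  fixes P :: real assumes "P \<ge> 1"
  shows "log 2 P \<le> 3 * sqrt P"
proof -
  have sp: "sqrt P > 0" using assms by simp
  have "ln P = 2 * ln (sqrt P)" using assms by (simp add: ln_sqrt)
  also have "\<dots> \<le> 2 * (sqrt P - 1)" using ln_le_minus_one[OF sp] by simp
  finally have h: "ln P \<le> 2 * (sqrt P - 1)" .
  have l2: "2/3 \<le> ln (2::real)" by (rule ln2_ge_two_thirds)
  have "log 2 P = ln P / ln 2" by (simp add: log_def)
  also have "\<dots> \<le> 2 * (sqrt P - 1) / ln 2" using h l2 by (simp add: divide_right_mono)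
  also have "\<dots> \<le> 2 * (sqrt P - 1) / (2/3)"
  proof (rule divide_left_mono)
    show "0 \<le> 2 * (sqrt P - 1)" using assms by simp
  qed (use l2 in auto)
  also have "\<dots> \<le> 3 * sqrt P" by simp
  finally show ?thesis .
qed

lemma small_primes_count:
  fixes P :: real assumes P: "P \<ge> 16"
  shows "real (card {p. prime p \<and> real p < P}) * log 2 P \<le> sqrt P * log 2 P + 4 * P"
proof -
  let ?l = "log 2 P"
  have l4: "?l \<ge> 4"
  proof -
    have "log 2 (16::real) = 4" by (simp add: log_nat_power[of 2 2 4, simplified])
    thus ?thesis using P log_mono[of 2 16 P] by simp
  qed
  let ?S1 = "{p. prime p \<and> real p \<le> sqrt P}"
  let ?S2 = "{p. prime p \<and> sqrt P < real p \<and> real p < P}"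
  let ?N = "nat \<lfloor>P\<rfloor>"
  have f2: "finite ?S2" by (rule finite_subset[of _ "{..?N}"]) (auto, linarith)
  have f1: "finite ?S1" by (rule finite_subset[of _ "{..nat \<lfloor>sqrt P\<rfloor>}"]) (auto, linarith)
  have un: "{p. prime p \<and> real p < P} \<subseteq> ?S1 \<union> ?S2" by auto
  have c1: "real (card ?S1) \<le> sqrt P"
  proof -
    have "?S1 \<subseteq> {1..nat \<lfloor>sqrt P\<rfloor>}"
    proof
      fix x assume x: "x \<in> ?S1"
      hence "x > 0" using prime_gt_0_nat by auto
      moreover have "x \<le> nat \<lfloor>sqrt P\<rfloor>" using x le_nat_floor by auto
      ultimately show "x \<in> {1..nat \<lfloor>sqrt P\<rfloor>}" by simp
    qed
    hence "card ?S1 \<le> nat \<lfloor>sqrt P\<rfloor>" using card_mono[OF finite_atLeastAtMost[of 1 "nat \<lfloor>sqrt P\<rfloor>"]] by simp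
    hence "real (card ?S1) \<le> real (nat \<lfloor>sqrt P\<rfloor>)" by simp
    also have "real (nat \<lfloor>sqrt P\<rfloor>) \<le> sqrt P" by (rule of_nat_floor) (use P in simp)
    finally show ?thesis .
  qed
  have c2: "real (card ?S2) * ?l \<le> 4 * P"
  proof -
    have "\<Prod>?S2 dvd \<Prod>{p. prime p \<and> p \<le> ?N}"
      by (rule prod_dvd_prod_subset) (auto, linarith)
    hence "\<Prod>?S2 \<le> \<Prod>{p. prime p \<and> p \<le> ?N}"
      by (rule dvd_imp_le) (auto intro!: prod_pos dest: prime_gt_0_nat)
    also have "\<dots> \<le> 4 ^ ?N" by (rule primorial_le)
    finally have A: "real (\<Prod>?S2) \<le> 4 ^ ?N" by (metis of_nat_le_iff of_nat_numeral of_nat_power)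
    have B: "sqrt P ^ card ?S2 \<le> real (\<Prod>?S2)"
    proof -
      have "sqrt P ^ card ?S2 = (\<Prod>p\<in>?S2. sqrt P)" by simp
      also have "\<dots> \<le> (\<Prod>p\<in>?S2. real p)" by (rule prod_mono) auto
      also have "\<dots> = real (\<Prod>?S2)" by simp
      finally show ?thesis .
    qed
    have sp: "sqrt P > 0" using P by simp
    have "log 2 (sqrt P ^ card ?S2) \<le> log 2 (4 ^ ?N)"
      using A B sp by (intro log_mono) auto
    moreover have "log 2 (sqrt P ^ card ?S2) = real (card ?S2) * (?l / 2)"
    proof -
      have "log 2 (sqrt P) = ?l / 2" using P by (simp add: log_def ln_sqrt)
      thus ?thesis using log_nat_power[of "sqrt P" 2 "card ?S2"] sp by simp
    qed
    moreover have "log 2 ((4::real) ^ ?N) = 2 * real ?N"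
    proof -
      have "ln (4::real) = 2 * ln 2" using ln_realpow[of 2 2] by simp
      thus ?thesis using log_nat_power[of "4::real" 2 ?N] by (simp add: log_def)
    qed
    moreover have "real ?N \<le> P" using P by linarith
    ultimately show ?thesis by (simp add: field_simps)
  qed
  have "card {p. prime p \<and> real p < P} \<le> card ?S1 + card ?S2"
    using card_mono[OF _ un] f1 f2 card_Un_le[of ?S1 ?S2] by (meson finite_UnI le_trans)
  hence "real (card {p. prime p \<and> real p < P}) * ?l \<le> (real (card ?S1) + real (card ?S2)) * ?l"
    using l4 by (intro mult_right_mono) auto
  also have "\<dots> = real (card ?S1) * ?l + real (card ?S2) * ?l" by (simp add: algebra_simps)
  also have "\<dots> \<le> sqrt P * ?l + 4 * P" using c1 c2 l4 by (intro add_mono mult_right_mono) auto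
  finally show ?thesis .
qed



lemma cheb:
  fixes P :: real assumes P: "P \<ge> 16"
  shows "real (card {p. prime p \<and> P \<le> real p \<and> real p \<le> 34 * P}) * log 2 P \<ge> 5 * P"
proof -
  let ?l = "log 2 P"
  let ?R = "{p. prime p \<and> P \<le> real p \<and> real p \<le> 34 * P}"
  let ?A = "{p. prime p \<and> real p < P}"
  have l4: "?l \<ge> 4"
  proof -
    have "log 2 (16::real) = 4" by (simp add: log_nat_power[of 2 2 4, simplified])
    thus ?thesis using P log_mono[of 2 16 P] by simp
  qed
  define m where "m = nat \<lfloor>17 * P\<rfloor>"
  have m1: "real m \<le> 17 * P" "real m > 17 * P - 1" unfolding m_def using P by linarith+
  hence mpos: "m > 0" using P by simp
  have fR: "finite ?R" by (rule finite_subset[of _ "{..nat \<lfloor>34*P\<rfloor>}"]) (auto intro: le_nat_floor)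
  have fA: "finite ?A" by (rule finite_subset[of _ "{..nat \<lfloor>P\<rfloor>}"]) (auto intro: le_nat_floor)
  have pc: "pcount (2*m) \<le> card ?A + card ?R"
  proof -
    have "{p. prime p \<and> p \<le> 2*m} \<subseteq> ?A \<union> ?R" using m1 by auto
    hence "pcount (2*m) \<le> card (?A \<union> ?R)" unfolding pcount_def using fA fR by (intro card_mono) auto
    also have "\<dots> \<le> card ?A + card ?R" by (rule card_Un_le)
    finally show ?thesis .
  qed
  have "4 ^ m / (2 * real m) \<le> real ((2*m) choose m)" by (rule central_binomial_lower_bound[OF mpos])
  also have "\<dots> \<le> real ((2*m) ^ pcount (2*m))" using binom_le_pcount[OF mpos] by linarith
  finally have "4 ^ m \<le> real (2*m) ^ pcount (2*m) * real (2*m)" using mpos by (simp add: field_simps)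
  hence h4: "(4::real) ^ m \<le> real (2*m) ^ (pcount (2*m) + 1)" by (metis Suc_eq_plus1 power_Suc2)
  have pos2m: "real (2*m) > 0" using mpos by simp
  have "log 2 ((4::real) ^ m) \<le> log 2 (real (2*m) ^ (pcount (2*m) + 1))"
    using h4 pos2m by (intro log_mono) auto
  moreover have "log 2 ((4::real) ^ m) = 2 * real m"
  proof -
    have "ln (4::real) = 2 * ln 2" using ln_realpow[of 2 2] by simp
    thus ?thesis using log_nat_power[of "4::real" 2 m] by (simp add: log_def)
  qed
  moreover have "log 2 (real (2*m) ^ (pcount (2*m) + 1)) = real (pcount (2*m) + 1) * log 2 (real (2*m))"
    by (rule log_nat_power) simp
  ultimately have h5: "2 * real m \<le> real (pcount (2*m) + 1) * log 2 (real (2*m))" by simp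
  have "log 2 (real (2*m)) \<le> log 2 (34 * P)" using m1 pos2m by (intro log_mono) auto
  also have "\<dots> = log 2 34 + ?l" using P by (simp add: log_mult)
  also have "log 2 (34::real) \<le> 6"
  proof -
    have "log 2 (34::real) \<le> log 2 64" by (intro log_mono) auto
    also have "log 2 (64::real) = 6" using log_nat_power[of 2 2 6] by simp
    finally show ?thesis .
  qed
  finally have "log 2 (real (2*m)) \<le> (5/2) * ?l" using l4 by linarith
  hence "real (pcount (2*m) + 1) * log 2 (real (2*m)) \<le> real (pcount (2*m) + 1) * ((5/2) * ?l)"
    by (intro mult_left_mono) auto
  also have "\<dots> \<le> (real (card ?A) + real (card ?R) + 1) * ((5/2) * ?l)"
    using pc l4 by (intro mult_right_mono) auto
  also have "\<dots> = (5/2) * (real (card ?A) * ?l) + (5/2) * (real (card ?R) * ?l) + (5/2) * ?l"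
    by (simp add: algebra_simps)
  finally have h6: "2 * real m \<le> (5/2) * (real (card ?A) * ?l) + (5/2) * (real (card ?R) * ?l) + (5/2) * ?l"
    using h5 by linarith
  have hA: "real (card ?A) * ?l \<le> sqrt P * ?l + 4 * P" by (rule small_primes_count[OF P])
  have hs: "?l \<le> 3 * sqrt P" using P by (intro log_le_3sqrt) simp
  have sq4: "sqrt P \<ge> 4" using P real_sqrt_le_mono[of 16 P] by simp
  have "sqrt P * ?l \<le> sqrt P * (3 * sqrt P)" using hs sq4 P by (intro mult_left_mono) auto
  also have "\<dots> = 3 * P" using P by simp
  finally have hsl: "sqrt P * ?l \<le> 3 * P" .
  have "4 * sqrt P \<le> sqrt P * sqrt P" using sq4 P by (intro mult_right_mono) auto
  hence "4 * sqrt P \<le> P" using P by simp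
  hence hl: "?l \<le> (3/4) * P" using hs by linarith
  show ?thesis using h6 hA hsl hl m1 P by linarith
qed



lemma collision:
  fixes A :: "nat set" and f :: "nat \<Rightarrow> 'b"
  assumes fin: "finite A"
  shows "card A - card (f ` A) \<le> card {(i,j). i \<in> A \<and> j \<in> A \<and> i < j \<and> f i = f j}"
proof -
  define g where "g r = Min {i\<in>A. f i = r}" for r
  have gA: "g r \<in> A \<and> f (g r) = r" if "r \<in> f ` A" for r
  proof -
    have "{i\<in>A. f i = r} \<noteq> {}" "finite {i\<in>A. f i = r}" using that fin by auto
    hence "g r \<in> {i\<in>A. f i = r}" unfolding g_def by (rule Min_in[rotated])
    thus ?thesis by simp
  qed
  have gle: "g (f j) \<le> j" if "j \<in> A" for j
    unfolding g_def using that fin by (intro Min_le) auto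
  let ?Mins = "g ` (f ` A)"
  have inj: "inj_on g (f ` A)" by (rule inj_onI) (metis gA)
  have cM: "card ?Mins = card (f ` A)" using card_image[OF inj] .
  have sub: "?Mins \<subseteq> A" using gA by auto
  have e: "card (A - ?Mins) = card A - card ?Mins" using sub fin by (simp add: card_Diff_subset finite_subset)
  have le: "card (A - ?Mins) \<le> card {(i,j). i \<in> A \<and> j \<in> A \<and> i < j \<and> f i = f j}"
  proof (rule card_inj_on_le)
    show "inj_on (\<lambda>j. (g (f j), j)) (A - ?Mins)" by (rule inj_onI) auto
    show "(\<lambda>j. (g (f j), j)) ` (A - ?Mins) \<subseteq> {(i,j). i \<in> A \<and> j \<in> A \<and> i < j \<and> f i = f j}"
    proof
      fix z assume "z \<in> (\<lambda>j. (g (f j), j)) ` (A - ?Mins)"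
      then obtain j where j: "j \<in> A" "j \<notin> ?Mins" and z: "z = (g (f j), j)" by auto
      have "g (f j) \<in> A" "f (g (f j)) = f j" using gA j by auto
      moreover have "g (f j) \<noteq> j"
      proof
        assume "g (f j) = j"
        hence "j \<in> ?Mins" using j(1) by (metis imageI)
        thus False using j(2) by simp
      qed
      hence "g (f j) < j" using gle[OF j(1)] by simp
      ultimately show "z \<in> {(i,j). i \<in> A \<and> j \<in> A \<and> i < j \<and> f i = f j}" using z j by auto
    qed
    show "finite {(i,j). i \<in> A \<and> j \<in> A \<and> i < j \<and> f i = f j}"
      by (rule finite_subset[of _ "A \<times> A"]) (use fin in auto)
  qed
  show ?thesis using e le cM by simp
qed

lemma few_prime_divisors:
  fixes D :: nat and T :: "nat set" and P L :: real
  assumes "finite T" "\<forall>p\<in>T. prime p \<and> p dvd D \<and> P \<le> real p" "D > 0" "P \<ge> 2" "real D \<le> 2 powr L"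
  shows "real (card T) * log 2 P \<le> L"
proof -
  have "\<Prod>T dvd D" using assms by (intro prod_primes_dvd) auto
  hence "\<Prod>T \<le> D" using assms(3) by (rule dvd_imp_le)
  hence A: "real (\<Prod>T) \<le> real D" by (simp only: of_nat_le_iff)
  have B: "P ^ card T \<le> real (\<Prod>T)"
  proof -
    have "P ^ card T = (\<Prod>p\<in>T. P)" by simp
    also have "\<dots> \<le> (\<Prod>p\<in>T. real p)" using assms by (intro prod_mono) auto
    also have "\<dots> = real (\<Prod>T)" by simp
    finally show ?thesis .
  qed
  have "log 2 (P ^ card T) \<le> log 2 (2 powr L)"
    using A B assms by (intro log_mono) auto
  thus ?thesis using assms by (simp add: log_nat_power)
qed



lemma bad_bound:
  fixes M B :: "nat set" and P L :: real and d :: nat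
  assumes fM: "finite M" and cM: "card M = 2*d"
    and Mb: "\<forall>i\<in>M. real i \<le> 2 powr L"
    and fB: "finite B"
    and Bp: "\<forall>p\<in>B. prime p \<and> P \<le> real p \<and> real (card ((\<lambda>i. i mod p) ` M)) \<le> 17/16 * real d"
    and P2: "P \<ge> 2" and L0: "L \<ge> 0"
  shows "real (card B) * (15/16 * real d) * log 2 P \<le> 4 * real d * real d * L"
proof -
  let ?Pairs = "{(i,j). i \<in> M \<and> j \<in> M \<and> i < j}"
  have fP: "finite ?Pairs" by (rule finite_subset[of _ "M \<times> M"]) (use fM in auto)
  have cP: "card ?Pairs \<le> 4 * d * d"
  proof -
    have "card ?Pairs \<le> card (M \<times> M)" by (rule card_mono) (use fM in auto)
    thus ?thesis using cM by (simp add: card_cartesian_product)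
  qed
  define T where "T z = {p\<in>B. p dvd snd z - fst z}" for z :: "nat \<times> nat"
  have Tz: "real (card (T z)) * log 2 P \<le> L" if zP: "z \<in> ?Pairs" for z
  proof (rule few_prime_divisors)
    show "finite (T z)" unfolding T_def using fB by simp
    obtain i j where z: "z = (i,j)" "i \<in> M" "j \<in> M" "i < j" using zP by (cases z) auto
    show "\<forall>p\<in>T z. prime p \<and> p dvd (snd z - fst z) \<and> P \<le> real p" unfolding T_def using Bp by auto
    show "snd z - fst z > 0" using z by simp
    show "real (snd z - fst z) \<le> 2 powr L" using z Mb by auto
  qed (rule P2)
  have Cp: "15/16 * real d \<le> real (card {z\<in>?Pairs. p dvd snd z - fst z})" if "p \<in> B" for p
  proof -
    have eq: "{z\<in>?Pairs. p dvd snd z - fst z} = {(i,j). i \<in> M \<and> j \<in> M \<and> i < j \<and> i mod p = j mod p}"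
      by auto (metis less_imp_le mod_eq_dvd_iff_nat)+
    have "card M - card ((\<lambda>i. i mod p) ` M) \<le> card {(i,j). i \<in> M \<and> j \<in> M \<and> i < j \<and> i mod p = j mod p}"
      by (rule collision[OF fM])
    moreover have "card ((\<lambda>i. i mod p) ` M) \<le> card M" by (rule card_image_le[OF fM])
    ultimately have "real (card M) - real (card ((\<lambda>i. i mod p) ` M)) \<le> real (card {z\<in>?Pairs. p dvd snd z - fst z})"
      unfolding eq by linarith
    thus ?thesis using Bp that cM by auto
  qed
  have "real (card B) * (15/16 * real d) = (\<Sum>p\<in>B. 15/16 * real d)" by simp
  also have "\<dots> \<le> (\<Sum>p\<in>B. real (card {z\<in>?Pairs. p dvd snd z - fst z}))"
    by (rule sum_mono) (rule Cp)
  also have "(\<Sum>p\<in>B. real (card {z\<in>?Pairs. p dvd snd z - fst z}))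
      = (\<Sum>p\<in>B. \<Sum>z\<in>?Pairs. if p dvd snd z - fst z then 1 else 0)"
  proof (rule sum.cong[OF refl])
    fix p
    have "card {z\<in>?Pairs. p dvd snd z - fst z} = (\<Sum>z\<in>?Pairs. if p dvd snd z - fst z then 1 else 0)"
      by (rule card_filter_sum[OF fP])
    hence "real (card {z\<in>?Pairs. p dvd snd z - fst z}) = real (\<Sum>z\<in>?Pairs. if p dvd snd z - fst z then 1 else 0)"
      by (simp only:)
    also have "\<dots> = (\<Sum>z\<in>?Pairs. real (if p dvd snd z - fst z then 1 else 0))" by (rule of_nat_sum)
    also have "\<dots> = (\<Sum>z\<in>?Pairs. if p dvd snd z - fst z then 1 else 0)" by (rule sum.cong) auto
    finally show "real (card {z\<in>?Pairs. p dvd snd z - fst z}) = (\<Sum>z\<in>?Pairs. if p dvd snd z - fst z then 1 else 0)" .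
  qed
  also have "\<dots> = (\<Sum>z\<in>?Pairs. \<Sum>p\<in>B. if p dvd snd z - fst z then 1 else 0)"
    by (rule sum.swap)
  also have "\<dots> = (\<Sum>z\<in>?Pairs. real (card (T z)))"
  proof (rule sum.cong[OF refl])
    fix z
    have "card (T z) = (\<Sum>p\<in>B. if p dvd snd z - fst z then 1 else 0)"
      unfolding T_def by (rule card_filter_sum[OF fB])
    hence "real (card (T z)) = real (\<Sum>p\<in>B. if p dvd snd z - fst z then 1 else 0)"
      by (simp only:)
    also have "\<dots> = (\<Sum>p\<in>B. real (if p dvd snd z - fst z then 1 else 0))" by (rule of_nat_sum)
    also have "\<dots> = (\<Sum>p\<in>B. if p dvd snd z - fst z then 1 else 0)" by (rule sum.cong) auto
    finally show "(\<Sum>p\<in>B. if p dvd snd z - fst z then 1 else 0) = real (card (T z))" by simp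
  qed
  finally have h1: "real (card B) * (15/16 * real d) \<le> (\<Sum>z\<in>?Pairs. real (card (T z)))" .
  have "real (card B) * (15/16 * real d) * log 2 P \<le> (\<Sum>z\<in>?Pairs. real (card (T z))) * log 2 P"
  proof (rule mult_right_mono[OF h1])
    show "0 \<le> log 2 P" using P2 by simp
  qed
  also have "\<dots> = (\<Sum>z\<in>?Pairs. real (card (T z)) * log 2 P)" by (simp add: sum_distrib_right)
  also have "\<dots> \<le> (\<Sum>z\<in>?Pairs. L)" by (rule sum_mono) (rule Tz)
  also have "\<dots> = real (card ?Pairs) * L" by simp
  also have "\<dots> \<le> real (4 * d * d) * L"
  proof (rule mult_right_mono)
    show "real (card ?Pairs) \<le> real (4*d*d)" using cP by linarith
    show "0 \<le> L" by (rule L0)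
  qed
  finally show ?thesis by simp
qed



lemma Delta_p_le_card:
  assumes "finite (mismatches S x y)"
  shows "Delta_p S x y p \<le> card (mismatches S x y)"
proof -
  have "{r \<in> {0..<p}. \<exists>i \<in> mismatches S x y. i mod p = r} \<subseteq> (\<lambda>i. i mod p) ` mismatches S x y" by auto
  hence "Delta_p S x y p \<le> card ((\<lambda>i. i mod p) ` mismatches S x y)"
    unfolding Delta_p_def using assms by (intro card_mono) auto
  also have "\<dots> \<le> card (mismatches S x y)" using assms by (rule card_image_le)
  finally show ?thesis .
qed

lemma Delta_p_eq:
  assumes "p > 0"
  shows "Delta_p S x y p = card ((\<lambda>i. i mod p) ` mismatches S x y)"
proof -
  have "{r \<in> {0..<p}. \<exists>i \<in> mismatches S x y. i mod p = r} = (\<lambda>i. i mod p) ` mismatches S x y"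
    using assms by auto
  thus ?thesis unfolding Delta_p_def by simp
qed

lemma Delta_le_iff:
  assumes "k > 0"
  shows "real (Delta S x y k ps) \<le> c \<longleftrightarrow> (\<forall>j<k. real (Delta_p S x y (ps j)) \<le> c)"
proof -
  let ?I = "(\<lambda>j. Delta_p S x y (ps j)) ` {..<k}"
  have fin: "finite ?I" and ne: "?I \<noteq> {}" using assms by auto
  have "Delta S x y k ps \<in> ?I" unfolding Delta_def using fin ne by (rule Max_in)
  moreover have "\<forall>j<k. Delta_p S x y (ps j) \<le> Delta S x y k ps" unfolding Delta_def using fin by auto
  ultimately show ?thesis by (force)
qed

theorem lemma5p1:
  fixes S :: "nat \<Rightarrow> 'a" and n d x y :: nat
  assumes "d \<ge> 1" and "1 \<le> x" and "x < y" and "y \<le> n" and "even (y - x + 1)"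
  shows "(ham_rev S x y \<le> d \<longrightarrow>
            (\<forall>ps \<in> prime_tuples n d. Delta S x y (num_primes n) ps \<le> d))
       \<and> (ham_rev S x y \<ge> 2 * d \<longrightarrow>
            measure_pmf.prob (pmf_of_set (prime_tuples n d))
              {ps. real (Delta S x y (num_primes n) ps) > (1 + beta) * real d}
            \<ge> 1 - 1 / real n ^ 3)"
proof -
  let ?M = "mismatches S x y"
  let ?k = "num_primes n"
  let ?L = "log 2 (real n)"
  have n2: "n \<ge> 2" using assms by simp
  have finM: "finite ?M" unfolding mismatches_def by simp
  have Msub: "?M \<subseteq> {x..y}" unfolding mismatches_def by auto
  have L1: "?L \<ge> 1" using n2 by simp
  have k_ge: "real ?k \<ge> ?L" unfolding num_primes_def using L1 by linarith
  hence kpos: "?k > 0" using L1 by simp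
  have two_k: "real n \<le> 2 ^ ?k"
  proof -
    have "real n = 2 powr ?L" using n2 by simp
    also have "\<dots> \<le> 2 powr real ?k" using k_ge by simp
    also have "\<dots> = 2 ^ ?k" by (simp add: powr_realpow)
    finally show ?thesis .
  qed
  show ?thesis
  proof (intro conjI impI)
    assume h: "ham_rev S x y \<le> d"
    show "\<forall>ps \<in> prime_tuples n d. Delta S x y ?k ps \<le> d"
    proof
      fix ps
      have "real (Delta S x y ?k ps) \<le> real d"
        unfolding Delta_le_iff[OF kpos]
        using Delta_p_le_card[OF finM] h unfolding ham_rev_def by (meson le_trans of_nat_le_iff)
      thus "Delta S x y ?k ps \<le> d" by simp
    qed
  next
    assume h: "ham_rev S x y \<ge> 2 * d"
    show "measure_pmf.prob (pmf_of_set (prime_tuples n d))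
              {ps. real (Delta S x y ?k ps) > (1 + beta) * real d} \<ge> 1 - 1 / real n ^ 3"
    proof -
    obtain M' where M': "M' \<subseteq> ?M" "card M' = 2*d" "finite M'"
      using h unfolding ham_rev_def by (metis obtain_subset_with_card_n)
    define P where "P = real d / beta * ?L\<^sup>2"
    let ?R = "prime_range n d"
    let ?l = "log 2 P"
    have Rdef: "?R = {p. prime p \<and> P \<le> real p \<and> real p \<le> 34 * P}"
      unfolding prime_range_def P_def by (simp add: algebra_simps)
    have dpos: "real d \<ge> 1" using assms by simp
    have Pe: "P = 16 * real d * ?L\<^sup>2" unfolding P_def beta_def by simp
    have dL: "16 * real d * ?L \<le> P"
    proof -
      have "?L \<le> ?L\<^sup>2" using L1 by (simp add: power2_eq_square)
      hence "(16 * real d) * ?L \<le> (16 * real d) * ?L\<^sup>2" using dpos by (intro mult_left_mono) auto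
      thus ?thesis using Pe by simp
    qed
    have "1 * 1 \<le> real d * ?L" using dpos L1 by (intro mult_mono) auto
    hence P16: "P \<ge> 16" using dL by linarith
    have l4: "?l \<ge> 4"
    proof -
      have "log 2 (16::real) = 4" by (simp add: log_nat_power[of 2 2 4, simplified])
      thus ?thesis using P16 log_mono[of 2 16 P] by simp
    qed
    have cheb': "real (card ?R) * ?l \<ge> 5 * P" unfolding Rdef by (rule cheb[OF P16])
    have finR: "finite ?R" unfolding Rdef
      by (rule finite_subset[of _ "{..nat \<lfloor>34*P\<rfloor>}"]) (auto intro: le_nat_floor)
    define Bad where "Bad = {p \<in> ?R. real (Delta_p S x y p) \<le> (1 + beta) * real d}"
    have finB: "finite Bad" unfolding Bad_def using finR by simp
    have BR: "Bad \<subseteq> ?R" unfolding Bad_def by auto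
    have bb: "real (card Bad) * (15/16 * real d) * ?l \<le> 4 * real d * real d * ?L"
    proof (rule bad_bound[OF M'(3) M'(2) _ finB])
      show "\<forall>i\<in>M'. real i \<le> 2 powr ?L"
      proof
        fix i assume "i \<in> M'"
        hence "i \<le> n" using M'(1) Msub assms by auto
        thus "real i \<le> 2 powr ?L" using n2 by simp
      qed
      show "\<forall>p\<in>Bad. prime p \<and> P \<le> real p \<and> real (card ((\<lambda>i. i mod p) ` M')) \<le> 17/16 * real d"
      proof
        fix p assume p: "p \<in> Bad"
        hence pr: "prime p" "P \<le> real p" and dl: "real (Delta_p S x y p) \<le> (1 + beta) * real d"
          unfolding Bad_def Rdef by auto
        have "card ((\<lambda>i. i mod p) ` M') \<le> card ((\<lambda>i. i mod p) ` ?M)"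
          using M'(1) finM by (intro card_mono) auto
        also have "\<dots> = Delta_p S x y p" using pr prime_gt_0_nat by (simp add: Delta_p_eq)
        finally have "real (card ((\<lambda>i. i mod p) ` M')) \<le> real (Delta_p S x y p)" by simp
        also have "\<dots> \<le> 17/16 * real d" using dl unfolding beta_def by simp
        finally show "prime p \<and> P \<le> real p \<and> real (card ((\<lambda>i. i mod p) ` M')) \<le> 17/16 * real d"
          using pr by simp
      qed
    qed (use P16 L1 in auto)
    have "real d * (real (card Bad) * ?l * (15/16)) \<le> real d * (4 * (real d * ?L))"
      using bb by (simp add: algebra_simps)
    also have "\<dots> \<le> real d * (P / 4)" using dL dpos by (intro mult_left_mono) auto
    finally have "real (card Bad) * ?l * (15/16) \<le> P / 4" using dpos
      by (simp add: mult_le_cancel_left_pos)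
    hence "8 * real (card Bad) * ?l \<le> real (card ?R) * ?l" using cheb' P16 by linarith
    hence B8: "8 * real (card Bad) \<le> real (card ?R)" using l4 by simp
    have Npos: "card ?R > 0"
    proof -
      have "real (card ?R) * ?l > 0" using cheb' P16 by linarith
      thus ?thesis using l4 by (simp add: zero_less_mult_iff)
    qed
    hence Rne: "?R \<noteq> {}" by auto
    let ?A = "prime_tuples n d"
    let ?E = "{ps. real (Delta S x y ?k ps) > (1 + beta) * real d}"
    let ?F = "PiE {..<?k} (\<lambda>_. Bad)"
    have finA: "finite ?A" unfolding prime_tuples_def using finR by (simp add: finite_PiE)
    have neA: "?A \<noteq> {}" unfolding prime_tuples_def using Rne by (simp add: PiE_eq_empty_iff)
    have FA: "?F \<subseteq> ?A" unfolding prime_tuples_def using BR by (intro PiE_mono) auto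
    have AE: "?A \<inter> ?E = ?A - ?F"
    proof (intro set_eqI iffI)
      fix ps assume "ps \<in> ?A \<inter> ?E"
      hence psA: "ps \<in> ?A" and "real (Delta S x y ?k ps) > (1 + beta) * real d" by auto
      hence "\<not> (\<forall>j<?k. real (Delta_p S x y (ps j)) \<le> (1 + beta) * real d)"
        using Delta_le_iff[OF kpos] by (meson not_le)
      then obtain j where j: "j < ?k" "\<not> real (Delta_p S x y (ps j)) \<le> (1 + beta) * real d" by blast
      hence "ps j \<notin> Bad" unfolding Bad_def by auto
      hence "ps \<notin> ?F" using j by (auto simp: PiE_iff)
      thus "ps \<in> ?A - ?F" using psA by simp
    next
      fix ps assume "ps \<in> ?A - ?F"
      hence psA: "ps \<in> ?A" and nF: "ps \<notin> ?F" by auto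
      have ext: "ps \<in> extensional {..<?k}" and inR: "\<forall>j<?k. ps j \<in> ?R"
        using psA unfolding prime_tuples_def by (auto simp: PiE_iff)
      have "\<not> (\<forall>j<?k. ps j \<in> Bad)" using nF ext by (auto simp: PiE_iff)
      then obtain j where j: "j < ?k" "ps j \<notin> Bad" by blast
      hence "\<not> real (Delta_p S x y (ps j)) \<le> (1 + beta) * real d" using inR unfolding Bad_def by auto
      hence "\<not> real (Delta S x y ?k ps) \<le> (1 + beta) * real d"
        using Delta_le_iff[OF kpos] j(1) by blast
      thus "ps \<in> ?A \<inter> ?E" using psA by auto
    qed
    have cA: "card ?A = card ?R ^ ?k" unfolding prime_tuples_def by (simp add: card_PiE)
    have cF: "card ?F = card Bad ^ ?k" by (simp add: card_PiE)
    have "measure_pmf.prob (pmf_of_set ?A) ?E = real (card (?A \<inter> ?E)) / real (card ?A)"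
      by (rule measure_pmf_of_set[OF neA finA])
    also have "card (?A \<inter> ?E) = card ?A - card ?F" unfolding AE using FA finA
      by (simp add: card_Diff_subset finite_subset)
    also have "real (card ?A - card ?F) = real (card ?A) - real (card ?F)"
      using card_mono[OF finA FA] by simp
    also have "(real (card ?A) - real (card ?F)) / real (card ?A) = 1 - (real (card Bad) / real (card ?R)) ^ ?k"
      using Npos unfolding cA cF by (simp add: field_simps power_divide)
    finally have pr: "measure_pmf.prob (pmf_of_set ?A) ?E = 1 - (real (card Bad) / real (card ?R)) ^ ?k" .
    have "(real (card Bad) / real (card ?R)) ^ ?k \<le> (1/8) ^ ?k"
      using B8 Npos by (intro power_mono) (auto simp: field_simps)
    also have "(1/8::real) ^ ?k = 1 / (2 ^ ?k) ^ 3"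
    proof -
      have "((2::real) ^ ?k) ^ 3 = 2 ^ (?k * 3)" by (rule power_mult[symmetric])
      also have "\<dots> = (2 ^ 3) ^ ?k" by (subst power_mult[symmetric]) (simp add: mult.commute)
      finally have "((2::real) ^ ?k) ^ 3 = 8 ^ ?k" by simp
      thus ?thesis by (simp add: power_divide)
    qed
    also have "\<dots> \<le> 1 / real n ^ 3"
      using two_k n2 by (intro divide_left_mono power_mono) auto
    finally show ?thesis using pr by linarith
    qed
  qed
qed

end
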